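(* Let $K$ be a nonnegative function on $\mathbb{R}$ with $\int K(x)\,dx=1$, which is bounded, satisfies $\int x^2K(x)\,dx<+\infty$, and is monotone on some neighborhood of $-\infty$ and on some neighborhood of $+\infty$. For $w>0$ let $K_w(y)=w^{-1}K(w^{-1}y)$ and, given $X_1,\dots,X_n$ i.i.d. with density $s$ with respect to Lebesgue measure, let $\widehat{s}_w(x)=\frac1n\sum_{i=1}^nK_w(x-X_i)$. Assume $s$ is supported on an interval of length $2L$, and let $\phi$ be a nondecreasing concave function on $[0,+\infty)$ with $\phi(0)=0$ and $\omega_2(\sqrt{s},\eta)\le\phi(\eta)$ for all $\eta\ge0$, where \[ \omega_2(\sqrt{s},\eta)=\sup_{|z|\le\eta}\left\|\sqrt{s}(\cdot+z)-\sqrt{s}\right\|. \] Then there is a constant $C(K)$ depending only on $K$, equal to $1$ when $K$ is unimodal, such that for all $w>0$, \[ \mathbb{E}_s\left[h^2(\widehat{s}_w,s)\right]\le2\left[\int_{\mathbb{R}}(1\vee x^2)K(x)\,dx\right]\phi^2(w)+\frac{2L\|K\|_\infty}{nw}+\frac{C(K)}{n}. \]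
   Context: $\|\cdot\|$ denotes the $\mathbb{L}_2$-norm with respect to Lebesgue measure on $\mathbb{R}$. For densities $t,u$, $h^2(t,u)=\frac12\int(\sqrt{t}-\sqrt{u})^2\,dx$ is the squared Hellinger distance. *)

theory Defs
  imports "HOL-Probability.Probability"
begin

definition L2norm :: "(real \<Rightarrow> real) \<Rightarrow> real" where
  "L2norm f = sqrt (LINT x|lborel. (f x)\<^sup>2)"

definition hellinger2 :: "(real \<Rightarrow> real) \<Rightarrow> (real \<Rightarrow> real) \<Rightarrow> real" where
  "hellinger2 t u = (1/2) * (LINT x|lborel. (sqrt (t x) - sqrt (u x))\<^sup>2)"

definition omega2 :: "(real \<Rightarrow> real) \<Rightarrow> real \<Rightarrow> real" where
  "omega2 f \<eta> = (SUP z\<in>{z. \<bar>z\<bar> \<le> \<eta>}. L2norm (\<lambda>x. f (x + z) - f x))"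

definition kernel_w :: "(real \<Rightarrow> real) \<Rightarrow> real \<Rightarrow> real \<Rightarrow> real" where
  "kernel_w K w y = K (y / w) / w"

definition kde :: "(real \<Rightarrow> real) \<Rightarrow> nat \<Rightarrow> real \<Rightarrow> (nat \<Rightarrow> real) \<Rightarrow> real \<Rightarrow> real" where
  "kde K n w X x = (1 / real n) * (\<Sum>i<n. kernel_w K w (x - X i))"

definition monotone_either :: "real set \<Rightarrow> (real \<Rightarrow> real) \<Rightarrow> bool" where
  "monotone_either S f \<longleftrightarrow> mono_on S f \<or> monotone_on S (\<le>) (\<ge>) f"

definition unimodal :: "(real \<Rightarrow> real) \<Rightarrow> bool" where
  "unimodal f \<longleftrightarrow> (\<exists>m. mono_on {..m} f \<and> monotone_on {m..} (\<le>) (\<ge>) f)"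

end

theory Submission
  imports Defs
begin

lemma sqrt_tangent:
  fixes y m :: real
  assumes "y \<ge> 0" "m > 0"
  shows "sqrt y \<ge> sqrt m + (y - m) / (2 * sqrt m) - (y - m)^2 / (2 * m * sqrt m)"
proof -
  define a where "a = sqrt y"
  define b where "b = sqrt m"
  have a0: "a \<ge> 0" and b0: "b > 0" using assms by (auto simp: a_def b_def)
  have y: "y = a^2" and m: "m = b^2" using assms by (auto simp: a_def b_def)
  have key: "2*a*b^3 \<ge> 2*b^4 + b^2*(a^2-b^2) - (a^2-b^2)^2"
  proof -
    have "(a^2-b^2)^2 - b^2*(a^2-b^2) - 2*b^4 + 2*a*b^3 = (a-b)^2 * a * (a + 2*b)"
      by (simp add: algebra_simps power2_eq_square power3_eq_cube power4_eq_xxxx)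
    also have "\<dots> \<ge> 0" using a0 b0 by simp
    finally show ?thesis by linarith
  qed
  have "sqrt m + (y - m) / (2 * sqrt m) - (y - m)^2 / (2 * m * sqrt m)
      = (2*b^4 + b^2*(a^2-b^2) - (a^2-b^2)^2) / (2*b^3)"
    using b0 by (simp add: y m b_def[symmetric] a_def[symmetric] field_simps power2_eq_square power3_eq_cube power4_eq_xxxx)
  also have "\<dots> \<le> (2*a*b^3) / (2*b^3)"
    using key b0 by (intro divide_right_mono) auto
  also have "\<dots> = a" using b0 by simp
  finally show ?thesis by (simp add: a_def)
qed


lemma (in prob_space) lemmaA:
  fixes Y :: "'a \<Rightarrow> real"
  assumes Ym: "Y \<in> borel_measurable M" and Yb: "\<And>\<omega>. \<omega> \<in> space M \<Longrightarrow> 0 \<le> Y \<omega> \<and> Y \<omega> \<le> B"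
    and EY: "expectation Y = m" and Var: "expectation (\<lambda>\<omega>. (Y \<omega> - m)^2) \<le> c * m"
    and c0: "c \<ge> 0" and s0: "s \<ge> 0"
  shows "expectation (\<lambda>\<omega>. (sqrt (Y \<omega>) - sqrt s)^2) \<le> 2*(sqrt m - sqrt s)^2 + (if s = 0 then 0 else 2*c)"
proof -
  have B0: "B \<ge> 0" using Yb[of "SOME x. x \<in> space M"] not_empty some_in_eq by fastforce
  have iY: "integrable M Y"
    by (rule integrable_const_bound[where B=B]) (use Yb Ym in auto)
  have iS: "integrable M (\<lambda>\<omega>. sqrt (Y \<omega>))"
    by (rule integrable_const_bound[where B="sqrt B"]) (use Yb Ym in \<open>auto simp: real_sqrt_le_mono\<close>)
  have m0: "m \<ge> 0" unfolding EY[symmetric] using Yb by (intro Bochner_Integration.integral_nonneg) auto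
  have ES0: "expectation (\<lambda>\<omega>. sqrt (Y \<omega>)) \<ge> 0" by (rule Bochner_Integration.integral_nonneg) (use Yb in auto)
  define S where "S = expectation (\<lambda>\<omega>. sqrt (Y \<omega>))"
  have expand: "expectation (\<lambda>\<omega>. (sqrt (Y \<omega>) - sqrt s)^2) = m + s - 2 * sqrt s * S"
  proof -
    have "expectation (\<lambda>\<omega>. (sqrt (Y \<omega>) - sqrt s)^2)
        = expectation (\<lambda>\<omega>. Y \<omega> - 2 * sqrt s * sqrt (Y \<omega>) + s)"
      using Yb by (intro Bochner_Integration.integral_cong) (auto simp: power2_eq_square algebra_simps real_sqrt_mult_self s0)
    also have "\<dots> = m + s - 2 * sqrt s * S"
      using iY iS EY prob_space by (simp add: S_def)
    finally show ?thesis .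
  qed
  show ?thesis
  proof (cases "s = 0")
    case True
    then show ?thesis using expand m0 by (simp add: power2_eq_square)
  next
    case sp: False
    show ?thesis
    proof (cases "m \<le> c/2")
      case True
      have "expectation (\<lambda>\<omega>. (sqrt (Y \<omega>) - sqrt s)^2) \<le> m + s"
        using expand ES0 s0 unfolding S_def by (simp add: mult_nonneg_nonneg)
      also have "\<dots> \<le> 2*(sqrt m - sqrt s)^2 + 3*m"
      proof -
        have "0 \<le> (2 * sqrt m - sqrt s)^2" by simp
        moreover have "(2 * sqrt m - sqrt s)^2 = 4*m - 4 * sqrt m * sqrt s + s"
          "(sqrt m - sqrt s)^2 = m - 2 * sqrt m * sqrt s + s"
          using m0 s0 by (simp_all add: power2_diff power_mult_distrib)
        ultimately show ?thesis by linarith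
      qed
      also have "\<dots> \<le> 2*(sqrt m - sqrt s)^2 + 2*c" using True c0 by simp
      finally show ?thesis using sp by simp
    next
      case False
      then have mp: "m > 0" using c0 by linarith
      define v where "v = sqrt m"
      define u where "u = sqrt s"
      have vp: "v > 0" using mp by (simp add: v_def)
      have u0: "u \<ge> 0" by (simp add: u_def s0)
      have vv: "v^2 = m" using m0 by (simp add: v_def)
      have pt: "\<And>\<omega>. \<omega> \<in> space M \<Longrightarrow> sqrt (Y \<omega>) \<ge> sqrt m + (Y \<omega> - m) / (2 * sqrt m) - (Y \<omega> - m)^2 / (2 * m * sqrt m)"
        using Yb mp by (intro sqrt_tangent) auto
      have iV: "integrable M (\<lambda>\<omega>. (Y \<omega> - m)^2)"
      proof (rule integrable_const_bound[where B="(B + m)^2"])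
        show "AE x in M. norm ((Y x - m)^2) \<le> (B + m)^2"
        proof (rule AE_I2)
          fix x assume x: "x \<in> space M"
          have "\<bar>Y x - m\<bar> \<le> \<bar>B + m\<bar>" using Yb[OF x] m0 by auto
          then show "norm ((Y x - m)^2) \<le> (B + m)^2" by (simp add: abs_le_square_iff)
        qed
      qed (use Ym in simp)
      have "expectation (\<lambda>\<omega>. sqrt m + (Y \<omega> - m) / (2 * sqrt m) - (Y \<omega> - m)^2 / (2 * m * sqrt m))
           = sqrt m + (expectation Y - m) / (2 * sqrt m) - expectation (\<lambda>\<omega>. (Y \<omega> - m)^2) / (2 * m * sqrt m)"
        using iY iV prob_space by (simp add: Bochner_Integration.integral_diff)
      also have "\<dots> = sqrt m - expectation (\<lambda>\<omega>. (Y \<omega> - m)^2) / (2 * m * sqrt m)" using EY by simp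
      also have "\<dots> \<ge> sqrt m - c * m / (2 * m * sqrt m)"
        using Var mp by (intro diff_left_mono divide_right_mono) auto
      moreover have "expectation (\<lambda>\<omega>. sqrt m + (Y \<omega> - m) / (2 * sqrt m) - (Y \<omega> - m)^2 / (2 * m * sqrt m)) \<le> S"
        unfolding S_def
        by (rule Bochner_Integration.integral_mono) (use pt iS iY iV in auto)
      ultimately have "S \<ge> sqrt m - c * m / (2 * m * sqrt m)" by linarith
      then have Sb: "S \<ge> v - c / (2 * v)" using mp by (simp add: v_def)
      have "expectation (\<lambda>\<omega>. (sqrt (Y \<omega>) - sqrt s)^2) \<le> m + s - 2 * u * (v - c / (2 * v))"
      proof -
        have "2 * u * (v - c / (2 * v)) \<le> 2 * u * S" using Sb u0 by (intro mult_left_mono) auto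
        then show ?thesis using expand by (simp add: u_def)
      qed
      also have "\<dots> = (v - u)^2 + c + c * (u - v) / v"
        using vp vv s0 by (simp add: u_def field_simps power2_eq_square)
      also have "\<dots> \<le> (v - u)^2 + c + ((u - v)^2 + (c / (2 * v))^2)"
      proof -
        have "c * (u - v) / v = 2 * (u - v) * (c / (2 * v))" using vp by (simp add: field_simps)
        also have "\<dots> \<le> (u - v)^2 + (c / (2 * v))^2"
          using sum_squares_bound[of "u - v" "c/(2 * v)"] by (simp add: power2_eq_square)
        finally show ?thesis by simp
      qed
      also have "(c / (2 * v))^2 = c * (c / (4 * m))" using vp vv by (simp add: power2_eq_square field_simps)
      finally have fin: "expectation (\<lambda>\<omega>. (sqrt (Y \<omega>) - sqrt s)^2) \<le> (v - u)^2 + c + ((u - v)^2 + c * (c / (4 * m)))" .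
      have "c * (c / (4 * m)) \<le> c * (1/2)"
        using False c0 mp by (intro mult_left_mono) (auto simp: field_simps)
      moreover have "(u - v)^2 = (v - u)^2" by (simp add: power2_commute)
      ultimately show ?thesis using sp c0 fin by (simp add: u_def v_def)
    qed
  qed
qed


lemma iid_moments:
  fixes P :: "real measure" and Z :: "real \<Rightarrow> real" and n :: nat
  assumes P: "prob_space P" and Zm: "Z \<in> borel_measurable P"
    and Z0: "\<And>y. 0 \<le> Z y" and ZB: "\<And>y. Z y \<le> Bd" and n1: "n \<ge> 1"
  shows "integral\<^sup>L (PiM {..<n} (\<lambda>_. P)) (\<lambda>X. (1/n) * (\<Sum>i<n. Z (X i))) = integral\<^sup>L P Z"
    and "integral\<^sup>L (PiM {..<n} (\<lambda>_. P)) (\<lambda>X. ((1/n) * (\<Sum>i<n. Z (X i)) - integral\<^sup>L P Z)^2)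
           \<le> Bd / n * integral\<^sup>L P Z"
proof -
  define M' where "M' = PiM {..<n} (\<lambda>_. P)"
  interpret P: prob_space P by (rule P)
  interpret M': prob_space M' unfolding M'_def by (intro prob_space_PiM P)
  interpret PS: product_sigma_finite "\<lambda>_. P"
    by unfold_locales
  define \<mu> where "\<mu> = integral\<^sup>L P Z"
  have Bd0: "Bd \<ge> 0" using Z0[of 0] ZB[of 0] by linarith
  have bint: "integrable Q f" if "prob_space Q" "f \<in> borel_measurable Q" "\<And>y. \<bar>f y\<bar> \<le> C" for Q and f :: "'b \<Rightarrow> real" and C
  proof -
    interpret Q: prob_space Q by (rule that(1))
    show ?thesis by (rule Q.integrable_const_bound[where B=C]) (use that in auto)
  qed
  have compm: "(\<lambda>X. f (X i)) \<in> borel_measurable M'" if "i < n" "f \<in> borel_measurable P" for i and f :: "real \<Rightarrow> real"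
    unfolding M'_def using measurable_compose[OF measurable_component_singleton[of i "{..<n}" "\<lambda>_. P"] that(2)] that by simp
  have comp: "integral\<^sup>L M' (\<lambda>X. f (X i)) = integral\<^sup>L P f" if "i < n" "f \<in> borel_measurable P" for i and f :: "real \<Rightarrow> real"
  proof -
    have "distr M' P (\<lambda>X. X i) = P"
      unfolding M'_def by (rule distr_PiM_component) (use P that in auto)
    then have "integral\<^sup>L P f = integral\<^sup>L (distr M' P (\<lambda>X. X i)) f" by simp
    also have "\<dots> = integral\<^sup>L M' (\<lambda>X. f (X i))"
      by (rule Bochner_Integration.integral_distr[of "\<lambda>X. X i" M' P f]) (use that in \<open>auto simp: M'_def intro!: measurable_component_singleton\<close>)
    finally show ?thesis by simp
  qed
  have cross: "integral\<^sup>L M' (\<lambda>X. f (X i) * g (X j)) = integral\<^sup>L P f * integral\<^sup>L P g"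
    if ij: "i < n" "j < n" "i \<noteq> j" and fm: "f \<in> borel_measurable P" and gm: "g \<in> borel_measurable P"
      and fb: "\<And>y. \<bar>f y\<bar> \<le> C" and gb: "\<And>y. \<bar>g y\<bar> \<le> C" for i j and f g :: "real \<Rightarrow> real" and C
  proof -
    define F where "F k = (if k = i then f else if k = j then g else (\<lambda>_. 1::real))" for k
    have FI: "integrable P (F k)" for k
      unfolding F_def using bint[OF P fm fb] bint[OF P gm gb] by auto
    have pe: "(\<Prod>k\<in>{..<n}. F k (X k)) = f (X i) * g (X j)" for X
    proof -
      have "(\<Prod>k\<in>{i,j}. F k (X k)) = (\<Prod>k\<in>{..<n}. F k (X k))"
        by (rule prod.mono_neutral_left) (use ij in \<open>auto simp: F_def\<close>)
      moreover have "(\<Prod>k\<in>{i,j}. F k (X k)) = f (X i) * g (X j)" using ij by (simp add: F_def)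
      ultimately show ?thesis by simp
    qed
    have "integral\<^sup>L M' (\<lambda>X. \<Prod>k\<in>{..<n}. F k (X k)) = (\<Prod>k\<in>{..<n}. integral\<^sup>L P (F k))"
      unfolding M'_def by (rule PS.product_integral_prod) (use FI in auto)
    also have "(\<Prod>k\<in>{..<n}. integral\<^sup>L P (F k)) = (\<Prod>k\<in>{i,j}. integral\<^sup>L P (F k))"
      by (rule prod.mono_neutral_right) (use ij in \<open>auto simp: F_def P.prob_space\<close>)
    also have "\<dots> = integral\<^sup>L P f * integral\<^sup>L P g" using ij by (simp add: F_def)
    finally show ?thesis using pe by simp
  qed
  have Zb: "\<bar>Z y\<bar> \<le> Bd" for y using Z0[of y] ZB[of y] by auto
  have \<mu>0: "\<mu> \<ge> 0" unfolding \<mu>_def by (rule Bochner_Integration.integral_nonneg) (use Z0 in auto)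
  have \<mu>B: "\<mu> \<le> Bd" unfolding \<mu>_def
    using Bochner_Integration.integral_mono[of P Z "\<lambda>_. Bd"] bint[OF P Zm Zb] ZB by (simp add: P.prob_space)
  have ZiI: "integrable M' (\<lambda>X. Z (X i))" if "i < n" for i
    by (rule bint[OF M'.prob_space_axioms compm[OF that Zm]]) (rule Zb)
  show e1: "integral\<^sup>L (PiM {..<n} (\<lambda>_. P)) (\<lambda>X. (1/n) * (\<Sum>i<n. Z (X i))) = integral\<^sup>L P Z"
  proof -
    have "integral\<^sup>L M' (\<lambda>X. (1/n) * (\<Sum>i<n. Z (X i))) = (1/n) * (\<Sum>i<n. integral\<^sup>L M' (\<lambda>X. Z (X i)))"
      using ZiI by (simp add: Bochner_Integration.integral_sum)
    also have "\<dots> = (1/n) * (\<Sum>i<n. \<mu>)" using comp[OF _ Zm] by (simp add: \<mu>_def)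
    also have "\<dots> = \<mu>" using n1 by simp
    finally show ?thesis by (simp add: M'_def \<mu>_def)
  qed
  define D where "D i X = Z (X i) - \<mu>" for i :: nat and X :: "nat \<Rightarrow> real"
  have Dm: "D i \<in> borel_measurable M'" if "i < n" for i
    unfolding D_def using compm[OF that Zm] by simp
  have Db: "\<bar>D i X\<bar> \<le> Bd" for i X unfolding D_def using Z0[of "X i"] ZB[of "X i"] \<mu>0 \<mu>B by auto
  have DDI: "integrable M' (\<lambda>X. D i X * D j X)" if "i < n" "j < n" for i j
    by (rule bint[of M' _ "Bd*Bd", OF M'.prob_space_axioms])
       (use Dm that in simp, simp add: abs_mult mult_mono Db Bd0)
  define V0 where "V0 = integral\<^sup>L P (\<lambda>y. (Z y - \<mu>)^2)"
  have Zmu: "(\<lambda>y. Z y - \<mu>) \<in> borel_measurable P" using Zm by simp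
  have Zmub: "\<bar>Z y - \<mu>\<bar> \<le> Bd" for y using Z0[of y] ZB[of y] \<mu>0 \<mu>B by auto
  have EDD: "integral\<^sup>L M' (\<lambda>X. D i X * D j X) = (if i = j then V0 else 0)" if "i < n" "j < n" for i j
  proof (cases "i = j")
    case True
    have "integral\<^sup>L M' (\<lambda>X. D i X * D j X) = integral\<^sup>L M' (\<lambda>X. (\<lambda>y. (Z y - \<mu>)^2) (X i))"
      using True by (simp add: D_def power2_eq_square)
    also have "\<dots> = V0" unfolding V0_def by (rule comp) (use that Zm in auto)
    finally show ?thesis using True by simp
  next
    case False
    have "integral\<^sup>L M' (\<lambda>X. D i X * D j X) = integral\<^sup>L P (\<lambda>y. Z y - \<mu>) * integral\<^sup>L P (\<lambda>y. Z y - \<mu>)"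
      unfolding D_def by (rule cross[OF that False Zmu Zmu Zmub Zmub])
    also have "integral\<^sup>L P (\<lambda>y. Z y - \<mu>) = 0"
      using bint[OF P Zm Zb] by (simp add: \<mu>_def P.prob_space)
    finally show ?thesis using False by simp
  qed
  have V0b: "V0 \<le> Bd * \<mu>"
  proof -
    have ZZ: "integrable P (\<lambda>y. Z y * Z y)"
      by (rule bint[of P _ "Bd*Bd", OF P]) (use Zm in simp, use Z0 ZB Bd0 in \<open>simp add: abs_mult mult_mono\<close>)
    have "V0 = integral\<^sup>L P (\<lambda>y. Z y * Z y - 2 * \<mu> * Z y + \<mu> * \<mu>)"
      unfolding V0_def by (simp add: power2_eq_square algebra_simps)
    also have "\<dots> = integral\<^sup>L P (\<lambda>y. Z y * Z y) - \<mu> * \<mu>"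
      using ZZ bint[OF P Zm Zb] by (simp add: P.prob_space \<mu>_def)
    also have "\<dots> \<le> integral\<^sup>L P (\<lambda>y. Bd * Z y)"
    proof -
      have "integral\<^sup>L P (\<lambda>y. Z y * Z y) \<le> integral\<^sup>L P (\<lambda>y. Bd * Z y)"
        by (rule Bochner_Integration.integral_mono) (use ZZ bint[OF P Zm Zb] Z0 ZB in \<open>auto simp: mult_right_mono\<close>)
      then show ?thesis by (smt (verit) zero_le_square)
    qed
    also have "\<dots> = Bd * \<mu>" by (simp add: \<mu>_def)
    finally show ?thesis .
  qed
  have sq: "((1/n) * (\<Sum>i<n. Z (X i)) - \<mu>)^2 = (1/n^2) * (\<Sum>i<n. \<Sum>j<n. D i X * D j X)" for X
  proof -
    have "(1/n) * (\<Sum>i<n. Z (X i)) - \<mu> = (1/n) * (\<Sum>i<n. D i X)"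
      using n1 by (simp add: D_def sum_subtractf field_simps)
    then show ?thesis
      by (simp add: power2_eq_square sum_product power_mult_distrib)
  qed
  have "integral\<^sup>L M' (\<lambda>X. ((1/n) * (\<Sum>i<n. Z (X i)) - \<mu>)^2)
      = (1/n^2) * (\<Sum>i<n. \<Sum>j<n. integral\<^sup>L M' (\<lambda>X. D i X * D j X))"
  proof -
    have "integral\<^sup>L M' (\<lambda>X. \<Sum>i<n. \<Sum>j<n. D i X * D j X) = (\<Sum>i<n. integral\<^sup>L M' (\<lambda>X. \<Sum>j<n. D i X * D j X))"
      by (rule Bochner_Integration.integral_sum) (auto intro!: Bochner_Integration.integrable_sum DDI)
    also have "\<dots> = (\<Sum>i<n. \<Sum>j<n. integral\<^sup>L M' (\<lambda>X. D i X * D j X))"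
      by (rule sum.cong[OF refl], rule Bochner_Integration.integral_sum) (auto intro!: DDI)
    finally show ?thesis unfolding sq by simp
  qed
  also have "\<dots> = (1/n^2) * (\<Sum>i<n. V0)"
    by (simp add: EDD)
  also have "\<dots> = V0 / n" using n1 by (simp add: power2_eq_square)
  also have "\<dots> \<le> Bd * \<mu> / n" using V0b by (simp add: divide_right_mono)
  finally show "integral\<^sup>L (PiM {..<n} (\<lambda>_. P)) (\<lambda>X. ((1/n) * (\<Sum>i<n. Z (X i)) - integral\<^sup>L P Z)^2)
           \<le> Bd / n * integral\<^sup>L P Z" by (simp add: M'_def \<mu>_def)
qed


lemma ennreal_integral_le_nn:
  fixes f :: "'a \<Rightarrow> real"
  assumes "f \<in> borel_measurable M" "\<And>x. 0 \<le> f x"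
  shows "ennreal (integral\<^sup>L M f) \<le> (\<integral>\<^sup>+x. ennreal (f x) \<partial>M)"
proof (cases "integrable M f")
  case True
  then show ?thesis using assms by (simp add: nn_integral_eq_integral)
next
  case False
  then show ?thesis by (simp add: not_integrable_integral_eq)
qed

lemma int_dom:
  fixes f g :: "'a \<Rightarrow> real"
  assumes "integrable M f" "g \<in> borel_measurable M" "\<And>x. \<bar>g x\<bar> \<le> f x"
  shows "integrable M g"
proof (rule Bochner_Integration.integrable_bound[OF assms(1,2)])
  show "AE x in M. norm (g x) \<le> norm (f x)"
    by (rule AE_I2) (use assms(3) in \<open>auto intro: order_trans[OF _ abs_ge_self]\<close>)
qed

lemma jensen_sqrt:
  fixes k s :: "real \<Rightarrow> real" and g :: real
  assumes km: "k \<in> borel_measurable borel" and k0: "\<And>y. 0 \<le> k y" and kB: "\<And>y. k y \<le> Bk"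
    and kI: "integrable lborel k" and k1: "integral\<^sup>L lborel k = 1"
    and sm: "s \<in> borel_measurable borel" and s0: "\<And>y. 0 \<le> s y" and sI: "integrable lborel s"
    and g0: "g \<ge> 0"
  shows "integrable lborel (\<lambda>y. k y * (sqrt (s y) - sqrt g)^2)"
    and "(sqrt (LINT y|lborel. k y * s y) - sqrt g)^2 \<le> (LINT y|lborel. k y * (sqrt (s y) - sqrt g)^2)"
proof -
  have ksI: "integrable lborel (\<lambda>y. k y * s y)"
    by (rule int_dom[where f="\<lambda>y. Bk * s y"])
       (use sI km sm k0 s0 kB in \<open>auto intro!: mult_right_mono simp: abs_mult\<close>)
  have bnd: "sqrt a \<le> a / (2*t) + t/2" if "t > 0" "a \<ge> 0" for a t :: real
  proof -
    have "0 \<le> (sqrt a - t)^2" by simp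
    then have "2 * t * sqrt a \<le> a + t^2" using that by (simp add: power2_diff mult.commute mult.left_commute)
    then show ?thesis using that by (simp add: field_simps power2_eq_square)
  qed
  have krI: "integrable lborel (\<lambda>y. k y * sqrt (s y))"
  proof (rule int_dom[where f="\<lambda>y. k y * s y + k y"])
    show "integrable lborel (\<lambda>y. k y * s y + k y)" using ksI kI by simp
    show "(\<lambda>y. k y * sqrt (s y)) \<in> borel_measurable lborel" using km sm by simp
    fix y
    have "sqrt (s y) \<le> s y + 1"
      using bnd[of "1/2" "s y"] s0[of y] by simp
    then have "k y * sqrt (s y) \<le> k y * (s y + 1)" using k0[of y] by (rule mult_left_mono)
    then show "\<bar>k y * sqrt (s y)\<bar> \<le> k y * s y + k y" using k0[of y] s0[of y] by (simp add: abs_mult algebra_simps)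
  qed
  define A where "A = (LINT y|lborel. k y * s y)"
  define R where "R = (LINT y|lborel. k y * sqrt (s y))"
  have A0: "A \<ge> 0" unfolding A_def
    by (rule Bochner_Integration.integral_nonneg) (use k0 s0 in simp)
  have Rt: "R \<le> A / (2*t) + t/2" if t: "t > 0" for t
  proof -
    have "R \<le> (LINT y|lborel. (1/(2*t)) * (k y * s y) + (t/2) * k y)"
      unfolding R_def
    proof (rule Bochner_Integration.integral_mono)
      show "integrable lborel (\<lambda>y. (1/(2*t)) * (k y * s y) + (t/2) * k y)" using ksI kI by simp
      fix y
      have "k y * sqrt (s y) \<le> k y * (s y / (2*t) + t/2)"
        using bnd[OF t s0[of y]] k0[of y] by (rule mult_left_mono)
      then show "k y * sqrt (s y) \<le> (1/(2*t)) * (k y * s y) + (t/2) * k y"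
        by (simp add: algebra_simps)
    qed (rule krI)
    also have "\<dots> = A / (2*t) + t/2" using ksI kI k1 by (simp add: A_def)
    finally show ?thesis .
  qed
  have RA: "R \<le> sqrt A"
  proof (cases "A > 0")
    case True
    then have "R \<le> A / (2 * sqrt A) + sqrt A / 2" using Rt[of "sqrt A"] by simp
    also have "\<dots> = sqrt A" using True
      by (simp add: field_simps)
    finally show ?thesis .
  next
    case False
    then have "A = 0" using A0 by simp
    show ?thesis
    proof (rule ccontr)
      assume "\<not> R \<le> sqrt A"
      then have "R > 0" using \<open>A = 0\<close> by simp
      then show False using Rt[of R] \<open>A = 0\<close> by simp
    qed
  qed
  have eq: "(\<lambda>y. k y * (sqrt (s y) - sqrt g)^2) = (\<lambda>y. k y * s y - (2 * sqrt g) * (k y * sqrt (s y)) + g * k y)"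
    using s0 g0 by (auto simp: power2_diff algebra_simps)
  show I: "integrable lborel (\<lambda>y. k y * (sqrt (s y) - sqrt g)^2)"
    unfolding eq using ksI krI kI by simp
  have "(LINT y|lborel. k y * (sqrt (s y) - sqrt g)^2) = A - 2 * sqrt g * R + g"
    unfolding eq using ksI krI kI k1 by (simp add: A_def R_def)
  moreover have "(sqrt A - sqrt g)^2 = A - 2 * sqrt g * sqrt A + g"
    using A0 g0 by (simp add: power2_diff algebra_simps)
  moreover have "sqrt g * R \<le> sqrt g * sqrt A" using RA g0 by (intro mult_left_mono) auto
  ultimately show "(sqrt (LINT y|lborel. k y * s y) - sqrt g)^2 \<le> (LINT y|lborel. k y * (sqrt (s y) - sqrt g)^2)"
    unfolding A_def[symmetric] by linarith
qed


lemma phi_scale: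
  fixes \<phi> :: "real \<Rightarrow> real"
  assumes mono: "mono_on {0..} \<phi>" and conc: "concave_on {0..} \<phi>" and p0: "\<phi> 0 = 0" and w: "w > 0"
  shows "(\<phi> \<bar>z\<bar>)^2 \<le> max 1 ((z/w)^2) * (\<phi> w)^2"
proof -
  have pos: "\<phi> a \<ge> 0" if "a \<ge> 0" for a
    using mono_onD[OF mono, of 0 a] that p0 by simp
  show ?thesis
  proof (cases "\<bar>z\<bar> \<le> w")
    case True
    have "\<phi> \<bar>z\<bar> \<le> \<phi> w" using mono_onD[OF mono, of "\<bar>z\<bar>" w] True w by simp
    then have "(\<phi> \<bar>z\<bar>)^2 \<le> (\<phi> w)^2" using pos[of "\<bar>z\<bar>"] by (simp add: power_mono)
    also have "\<dots> \<le> max 1 ((z/w)^2) * (\<phi> w)^2" using mult_right_mono[of 1 "max 1 ((z/w)^2)" "(\<phi> w)^2"] by simp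
    finally show ?thesis .
  next
    case False
    define t where "t = w / \<bar>z\<bar>"
    have t: "0 \<le> t" "t \<le> 1" using False w by (auto simp: t_def)
    have "\<phi> ((1 - t) *\<^sub>R 0 + t *\<^sub>R \<bar>z\<bar>) \<ge> (1 - t) * \<phi> 0 + t * \<phi> \<bar>z\<bar>"
      by (rule concave_onD[OF conc]) (use t in auto)
    moreover have "(1 - t) *\<^sub>R 0 + t *\<^sub>R \<bar>z\<bar> = w" using False w by (simp add: t_def)
    ultimately have "t * \<phi> \<bar>z\<bar> \<le> \<phi> w" using p0 by simp
    then have le: "\<phi> \<bar>z\<bar> \<le> (\<bar>z\<bar>/w) * \<phi> w" using False w
      by (simp add: t_def field_simps)
    have "(\<phi> \<bar>z\<bar>)^2 \<le> ((\<bar>z\<bar>/w) * \<phi> w)^2" using le pos[of "\<bar>z\<bar>"] by (simp add: power_mono)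
    also have "\<dots> = (z/w)^2 * (\<phi> w)^2" by (simp add: power_mult_distrib power_divide)
    also have "\<dots> \<le> max 1 ((z/w)^2) * (\<phi> w)^2" by (simp add: mult_right_mono)
    finally show ?thesis .
  qed
qed


lemma shift_L2:
  fixes s :: "real \<Rightarrow> real"
  assumes sm: "s \<in> borel_measurable borel" and s0: "\<And>x. 0 \<le> s x" and sI: "has_bochner_integral lborel s 1"
  shows "integrable lborel (\<lambda>x. (sqrt (s (x+z)) - sqrt (s x))^2)"
    and "(LINT x|lborel. (sqrt (s (x+z)) - sqrt (s x))^2) \<le> 4"
proof -
  have sI': "integrable lborel s" and s1: "integral\<^sup>L lborel s = 1"
    using sI by (auto simp: has_bochner_integral_iff)
  have tI: "integrable lborel (\<lambda>x. s (x + z))"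
    using lborel_integrable_real_affine[OF sI', of 1 z] by (simp add: add.commute)
  have t1: "(LINT x|lborel. s (x + z)) = 1"
    using lborel_integral_real_affine[of 1 s z] s1 by (simp add: add.commute)
  have bnd: "\<bar>(sqrt (s (x+z)) - sqrt (s x))^2\<bar> \<le> 2 * s (x+z) + 2 * s x" for x
  proof -
    have "0 \<le> (sqrt (s (x+z)) + sqrt (s x))^2" by simp
    moreover have "(sqrt (s (x+z)) - sqrt (s x))^2 + (sqrt (s (x+z)) + sqrt (s x))^2
        = 2 * (sqrt (s (x+z)))^2 + 2 * (sqrt (s x))^2" by (simp add: power2_diff power2_sum)
    ultimately have "(sqrt (s (x+z)) - sqrt (s x))^2 \<le> 2 * (sqrt (s (x+z)))^2 + 2 * (sqrt (s x))^2"
      by linarith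
    then show ?thesis using s0[of x] s0[of "x+z"] by simp
  qed
  show I: "integrable lborel (\<lambda>x. (sqrt (s (x+z)) - sqrt (s x))^2)"
    by (rule int_dom[where f="\<lambda>x. 2 * s (x+z) + 2 * s x"]) (use tI sI' sm bnd in auto)
  have "(LINT x|lborel. (sqrt (s (x+z)) - sqrt (s x))^2) \<le> (LINT x|lborel. 2 * s (x+z) + 2 * s x)"
    by (rule Bochner_Integration.integral_mono) (use I tI sI' bnd in auto)
  also have "\<dots> = 4" using tI sI' t1 s1 by simp
  finally show "(LINT x|lborel. (sqrt (s (x+z)) - sqrt (s x))^2) \<le> 4" .
qed

lemma omega_bound:
  fixes s :: "real \<Rightarrow> real"
  assumes sm: "s \<in> borel_measurable borel" and s0: "\<And>x. 0 \<le> s x" and sI: "has_bochner_integral lborel s 1"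
    and om: "\<forall>\<eta>\<ge>0. omega2 (\<lambda>x. sqrt (s x)) \<eta> \<le> \<phi> \<eta>"
  shows "(\<integral>\<^sup>+x. ennreal ((sqrt (s (x+z)) - sqrt (s x))^2) \<partial>lborel) \<le> ennreal ((\<phi> \<bar>z\<bar>)^2)"
proof -
  define J where "J z' = (LINT x|lborel. (sqrt (s (x+z')) - sqrt (s x))^2)" for z'
  have J0: "J z' \<ge> 0" for z' unfolding J_def by (rule Bochner_Integration.integral_nonneg) simp
  have L2: "L2norm (\<lambda>x. sqrt (s (x + z')) - sqrt (s x)) = sqrt (J z')" for z'
    by (simp add: L2norm_def J_def)
  have bdd: "bdd_above ((\<lambda>z'. L2norm (\<lambda>x. sqrt (s (x + z')) - sqrt (s x))) ` {z'. \<bar>z'\<bar> \<le> \<bar>z\<bar>})"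
  proof (rule bdd_aboveI2[where M=2])
    fix z' show "L2norm (\<lambda>x. sqrt (s (x + z')) - sqrt (s x)) \<le> 2"
      using shift_L2(2)[OF sm s0 sI, of z'] unfolding L2 J_def
      by (metis real_sqrt_four real_sqrt_le_iff)
  qed
  have "L2norm (\<lambda>x. sqrt (s (x + z)) - sqrt (s x)) \<le> omega2 (\<lambda>x. sqrt (s x)) \<bar>z\<bar>"
    unfolding omega2_def by (rule cSUP_upper[OF _ bdd]) simp
  also have "\<dots> \<le> \<phi> \<bar>z\<bar>" using om by simp
  finally have le: "sqrt (J z) \<le> \<phi> \<bar>z\<bar>" unfolding L2 .
  have "(\<integral>\<^sup>+x. ennreal ((sqrt (s (x+z)) - sqrt (s x))^2) \<partial>lborel) = ennreal (J z)"
    unfolding J_def by (rule nn_integral_eq_integral[OF shift_L2(1)[OF sm s0 sI]]) simp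
  also have "J z = (sqrt (J z))^2" using J0 by simp
  also have "ennreal \<dots> \<le> ennreal ((\<phi> \<bar>z\<bar>)^2)"
    using le J0[of z] by (intro ennreal_leI power_mono) auto
  finally show ?thesis .
qed


lemma kernel_facts:
  fixes K :: "real \<Rightarrow> real"
  assumes Km: "K \<in> borel_measurable borel" and K0: "\<And>x. 0 \<le> K x"
    and KI: "has_bochner_integral lborel K 1" and KB: "\<And>x. K x \<le> Mx" and w: "w > 0"
  shows "(\<lambda>y. kernel_w K w (x - y)) \<in> borel_measurable borel"
    and "\<And>y. 0 \<le> kernel_w K w (x - y)"
    and "\<And>y. kernel_w K w (x - y) \<le> Mx / w"
    and "integrable lborel (\<lambda>y. kernel_w K w (x - y))"
    and "(LINT y|lborel. kernel_w K w (x - y)) = 1"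
proof -
  have KI': "integrable lborel K" and K1: "integral\<^sup>L lborel K = 1"
    using KI by (auto simp: has_bochner_integral_iff)
  show "(\<lambda>y. kernel_w K w (x - y)) \<in> borel_measurable borel"
    using Km by (simp add: kernel_w_def)
  show "\<And>y. 0 \<le> kernel_w K w (x - y)" using K0 w by (simp add: kernel_w_def)
  show "\<And>y. kernel_w K w (x - y) \<le> Mx / w" using KB w by (simp add: kernel_w_def divide_right_mono)
  have e: "(\<lambda>u. kernel_w K w (x - (x + (- w) * u))) = (\<lambda>u. K u / w)"
    using w by (simp add: kernel_w_def)
  have "integrable lborel (\<lambda>u. kernel_w K w (x - (x + (- w) * u)))"
    unfolding e using KI' by simp
  then show "integrable lborel (\<lambda>y. kernel_w K w (x - y))"
    using lborel_integrable_real_affine_iff[of "-w" "\<lambda>y. kernel_w K w (x - y)" x] w by simp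
  have "(LINT y|lborel. kernel_w K w (x - y)) = \<bar>-w\<bar> *\<^sub>R (LINT u|lborel. kernel_w K w (x - (x + (- w) * u)))"
    by (rule lborel_integral_real_affine) (use w in simp)
  also have "\<dots> = 1" unfolding e using w K1 by simp
  finally show "(LINT y|lborel. kernel_w K w (x - y)) = 1" .
qed


lemma bias:
  fixes K s \<phi> :: "real \<Rightarrow> real" and w Mx :: real
  assumes Km[measurable]: "K \<in> borel_measurable borel" and K0: "\<And>x. 0 \<le> K x"
    and KI: "has_bochner_integral lborel K 1" and KB: "\<And>x. K x \<le> Mx"
    and K2: "integrable lborel (\<lambda>x. x\<^sup>2 * K x)"
    and sm[measurable]: "s \<in> borel_measurable borel" and s0: "\<And>x. 0 \<le> s x" and sI: "has_bochner_integral lborel s 1"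
    and mono: "mono_on {0..} \<phi>" and conc: "concave_on {0..} \<phi>" and p0: "\<phi> 0 = 0"
    and om: "\<forall>\<eta>\<ge>0. omega2 (\<lambda>x. sqrt (s x)) \<eta> \<le> \<phi> \<eta>" and w: "w > 0"
  shows "(\<integral>\<^sup>+x. ennreal ((sqrt (LINT y|lborel. kernel_w K w (x - y) * s y) - sqrt (s x))^2) \<partial>lborel)
         \<le> ennreal ((LINT x|lborel. max 1 (x\<^sup>2) * K x) * (\<phi> w)^2)"
proof -
  have KI': "integrable lborel K" using KI by (auto simp: has_bochner_integral_iff)
  have sI': "integrable lborel s" using sI by (auto simp: has_bochner_integral_iff)
  define G where "G x y = kernel_w K w (x - y) * (sqrt (s y) - sqrt (s x))^2" for x y
  have step1: "(\<integral>\<^sup>+x. ennreal ((sqrt (LINT y|lborel. kernel_w K w (x - y) * s y) - sqrt (s x))^2) \<partial>lborel)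
      \<le> (\<integral>\<^sup>+x. (\<integral>\<^sup>+y. ennreal (G x y) \<partial>lborel) \<partial>lborel)"
  proof (rule nn_integral_mono)
    fix x
    note kf = kernel_facts[OF Km K0 KI KB w, of x]
    have "(sqrt (LINT y|lborel. kernel_w K w (x - y) * s y) - sqrt (s x))^2 \<le> (LINT y|lborel. G x y)"
      unfolding G_def by (rule jensen_sqrt(2)[OF kf(1,2,3,4,5) sm s0 sI' s0])
    then have "ennreal ((sqrt (LINT y|lborel. kernel_w K w (x - y) * s y) - sqrt (s x))^2) \<le> ennreal (LINT y|lborel. G x y)"
      by (rule ennreal_leI)
    also have "\<dots> \<le> (\<integral>\<^sup>+y. ennreal (G x y) \<partial>lborel)"
    proof (rule ennreal_integral_le_nn)
      show "(\<lambda>y. G x y) \<in> borel_measurable lborel" unfolding G_def kernel_w_def by measurable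
      show "\<And>y. 0 \<le> G x y" using kf(2) by (simp add: G_def)
    qed
    finally show "ennreal ((sqrt (LINT y|lborel. kernel_w K w (x - y) * s y) - sqrt (s x))^2) \<le> (\<integral>\<^sup>+y. ennreal (G x y) \<partial>lborel)" .
  qed
  define H where "H x z = kernel_w K w (- z) * (sqrt (s (x + z)) - sqrt (s x))^2" for x z
  have step2: "(\<integral>\<^sup>+y. ennreal (G x y) \<partial>lborel) = (\<integral>\<^sup>+z. ennreal (H x z) \<partial>lborel)" for x
  proof -
    have m: "(\<lambda>y. ennreal (G x y)) \<in> borel_measurable borel" unfolding G_def kernel_w_def by measurable
    show ?thesis using nn_integral_real_affine[OF m, of 1 x] by (simp add: G_def H_def)
  qed

  have Hm: "(\<lambda>(x, z). ennreal (H x z)) \<in> borel_measurable (lborel \<Otimes>\<^sub>M lborel)"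
    unfolding H_def kernel_w_def by measurable
  have step3: "(\<integral>\<^sup>+x. (\<integral>\<^sup>+z. ennreal (H x z) \<partial>lborel) \<partial>lborel) = (\<integral>\<^sup>+z. (\<integral>\<^sup>+x. ennreal (H x z) \<partial>lborel) \<partial>lborel)"
    using lborel_pair.Fubini'[OF Hm] by simp
  have step4: "(\<integral>\<^sup>+x. ennreal (H x z) \<partial>lborel) \<le> ennreal (kernel_w K w (- z) * max 1 ((z/w)^2) * (\<phi> w)^2)" for z
  proof -
    have kz: "kernel_w K w (- z) \<ge> 0" using K0 w by (simp add: kernel_w_def)
    have "(\<integral>\<^sup>+x. ennreal (H x z) \<partial>lborel) = (\<integral>\<^sup>+x. ennreal (kernel_w K w (- z)) * ennreal ((sqrt (s (x + z)) - sqrt (s x))^2) \<partial>lborel)"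
      unfolding H_def using kz by (simp add: ennreal_mult)
    also have "\<dots> = ennreal (kernel_w K w (- z)) * (\<integral>\<^sup>+x. ennreal ((sqrt (s (x + z)) - sqrt (s x))^2) \<partial>lborel)"
      by (rule nn_integral_cmult) simp
    also have "\<dots> \<le> ennreal (kernel_w K w (- z)) * ennreal ((\<phi> \<bar>z\<bar>)^2)"
      by (intro mult_left_mono omega_bound[OF sm s0 sI om]) simp
    also have "\<dots> \<le> ennreal (kernel_w K w (- z)) * ennreal (max 1 ((z/w)^2) * (\<phi> w)^2)"
      by (intro mult_left_mono ennreal_leI phi_scale[OF mono conc p0 w]) simp
    also have "\<dots> = ennreal (kernel_w K w (- z) * max 1 ((z/w)^2) * (\<phi> w)^2)"
      using kz by (simp add: ennreal_mult[symmetric] mult.assoc)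
    finally show ?thesis .
  qed
  define B where "B = (LINT x|lborel. max 1 (x\<^sup>2) * K x)"
  have BI: "integrable lborel (\<lambda>x. max 1 (x\<^sup>2) * K x)"
    by (rule int_dom[where f="\<lambda>x. K x + x\<^sup>2 * K x"]) (use KI' K2 K0 in \<open>auto simp: abs_mult max_def distrib_right\<close>)
  have step5: "(\<integral>\<^sup>+z. ennreal (kernel_w K w (- z) * max 1 ((z/w)^2) * (\<phi> w)^2) \<partial>lborel) = ennreal (B * (\<phi> w)^2)"
  proof -
    have m: "(\<lambda>z. ennreal (kernel_w K w (- z) * max 1 ((z/w)^2) * (\<phi> w)^2)) \<in> borel_measurable borel"
      unfolding kernel_w_def by measurable
    have "(\<integral>\<^sup>+z. ennreal (kernel_w K w (- z) * max 1 ((z/w)^2) * (\<phi> w)^2) \<partial>lborel)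
        = ennreal w * (\<integral>\<^sup>+u. ennreal (kernel_w K w (- (0 + (-w) * u)) * max 1 (((0 + (-w) * u)/w)^2) * (\<phi> w)^2) \<partial>lborel)"
      using nn_integral_real_affine[OF m, of "-w" 0] w by simp
    also have "\<dots> = ennreal w * (\<integral>\<^sup>+u. ennreal (K u / w * max 1 (u^2) * (\<phi> w)^2) \<partial>lborel)"
    proof -
      have "kernel_w K w (- (0 + (-w) * u)) * max 1 (((0 + (-w) * u)/w)^2) * (\<phi> w)^2
            = K u / w * max 1 (u^2) * (\<phi> w)^2" for u
      proof -
        have e1: "- (0 + (-w) * u) = w * u" by simp
        have e2: "(0 + (-w) * u)/w = - u" using w by simp
        have e3: "(w * u) / w = u" using w by simp
        show ?thesis unfolding e1 e2 kernel_w_def e3 by simp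
      qed
      then show ?thesis by simp
    qed
    also have "\<dots> = (\<integral>\<^sup>+u. ennreal w * ennreal (K u / w * max 1 (u^2) * (\<phi> w)^2) \<partial>lborel)"
      by (rule nn_integral_cmult[symmetric]) simp
    also have "\<dots> = (\<integral>\<^sup>+u. ennreal (max 1 (u\<^sup>2) * K u * (\<phi> w)^2) \<partial>lborel)"
    proof (rule nn_integral_cong)
      fix u
      have nn: "0 \<le> K u / w * max 1 (u^2) * (\<phi> w)^2" using K0[of u] w by simp
      have "ennreal w * ennreal (K u / w * max 1 (u^2) * (\<phi> w)^2) = ennreal (w * (K u / w * max 1 (u^2) * (\<phi> w)^2))"
        by (rule ennreal_mult[symmetric]) (use w nn in auto)
      also have "w * (K u / w * max 1 (u^2) * (\<phi> w)^2) = max 1 (u\<^sup>2) * K u * (\<phi> w)^2"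
        using w by simp
      finally show "ennreal w * ennreal (K u / w * max 1 (u^2) * (\<phi> w)^2) = ennreal (max 1 (u\<^sup>2) * K u * (\<phi> w)^2)" .
    qed
    also have "\<dots> = ennreal (LINT u|lborel. max 1 (u\<^sup>2) * K u * (\<phi> w)^2)"
      by (rule nn_integral_eq_integral) (use BI K0 in auto)
    also have "\<dots> = ennreal (B * (\<phi> w)^2)" by (simp add: B_def)
    finally show ?thesis .
  qed
  have "(\<integral>\<^sup>+x. (\<integral>\<^sup>+y. ennreal (G x y) \<partial>lborel) \<partial>lborel) = (\<integral>\<^sup>+z. (\<integral>\<^sup>+x. ennreal (H x z) \<partial>lborel) \<partial>lborel)"
    unfolding step2 step3 ..
  also have "\<dots> \<le> (\<integral>\<^sup>+z. ennreal (kernel_w K w (- z) * max 1 ((z/w)^2) * (\<phi> w)^2) \<partial>lborel)"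
    by (rule nn_integral_mono) (rule step4)
  finally have "(\<integral>\<^sup>+x. (\<integral>\<^sup>+y. ennreal (G x y) \<partial>lborel) \<partial>lborel) \<le> ennreal (B * (\<phi> w)^2)"
    unfolding step5 .
  then show ?thesis using step1 unfolding B_def by (rule order_trans[rotated])
qed


theorem theorem2:
  fixes K :: "real \<Rightarrow> real"
  assumes K_meas: "K \<in> borel_measurable borel"
    and K_nonneg: "\<And>x. K x \<ge> 0"
    and K_int: "has_bochner_integral lborel K 1"
    and K_bdd: "bdd_above (range K)"
    and K_mom2: "integrable lborel (\<lambda>x. x\<^sup>2 * K x)"
    and K_left: "\<exists>a. monotone_either {..a} K"
    and K_right: "\<exists>b. monotone_either {b..} K"
  shows "\<exists>C::real. (unimodal K \<longrightarrow> C = 1) \<and>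
    (\<forall>(s::real \<Rightarrow> real) (L::real) (\<phi>::real \<Rightarrow> real) (n::nat) (w::real).
      s \<in> borel_measurable borel \<longrightarrow> (\<forall>x. s x \<ge> 0) \<longrightarrow>
      has_bochner_integral lborel s 1 \<longrightarrow>
      (\<exists>a. \<forall>x. x \<notin> {a..a + 2 * L} \<longrightarrow> s x = 0) \<longrightarrow>
      mono_on {0..} \<phi> \<longrightarrow> concave_on {0..} \<phi> \<longrightarrow> \<phi> 0 = 0 \<longrightarrow>
      (\<forall>\<eta>\<ge>0. omega2 (\<lambda>x. sqrt (s x)) \<eta> \<le> \<phi> \<eta>) \<longrightarrow>
      n \<ge> 1 \<longrightarrow> w > 0 \<longrightarrow>
      (\<integral>\<^sup>+ X. ennreal (hellinger2 (kde K n w X) s)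
          \<partial>(PiM {..<n} (\<lambda>_. density lborel (\<lambda>x. ennreal (s x)))))
        \<le> ennreal (2 * (LINT x|lborel. max 1 (x\<^sup>2) * K x) * (\<phi> w)\<^sup>2
                   + 2 * L * (SUP x. K x) / (real n * w) + C / real n))"
proof (rule exI[of _ 1], intro conjI impI allI)
  fix s :: "real \<Rightarrow> real" and L :: real and \<phi> :: "real \<Rightarrow> real" and n :: nat and w :: real
  assume sm[measurable]: "s \<in> borel_measurable borel" and s0': "\<forall>x. s x \<ge> 0"
    and sI: "has_bochner_integral lborel s 1"
    and supp: "\<exists>a. \<forall>x. x \<notin> {a..a + 2 * L} \<longrightarrow> s x = 0"
    and mono: "mono_on {0..} \<phi>" and conc: "concave_on {0..} \<phi>" and p0: "\<phi> 0 = 0"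
    and om: "\<forall>\<eta>\<ge>0. omega2 (\<lambda>x. sqrt (s x)) \<eta> \<le> \<phi> \<eta>"
    and n1: "n \<ge> 1" and w: "w > 0"
  have s0: "\<And>x. 0 \<le> s x" using s0' by simp
  note Km[measurable] = K_meas
  define Mx where "Mx = (SUP x. K x)"
  have KB: "K x \<le> Mx" for x unfolding Mx_def by (rule cSUP_upper[OF _ K_bdd]) simp
  have Mx0: "Mx \<ge> 0" using KB[of 0] K_nonneg[of 0] by simp
  obtain a where a: "\<And>x. x \<notin> {a..a + 2 * L} \<Longrightarrow> s x = 0" using supp by blast
  have sI': "integrable lborel s" and s1: "integral\<^sup>L lborel s = 1"
    using sI by (auto simp: has_bochner_integral_iff)
  have L0: "L \<ge> 0"
  proof (rule ccontr)
    assume "\<not> L \<ge> 0"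
    then have "s x = 0" for x using a[of x] by auto
    then have "s = (\<lambda>_. 0)" by auto
    then have "integral\<^sup>L lborel s = 0" by simp
    then show False using s1 by simp
  qed
  define P where "P = density lborel (\<lambda>x. ennreal (s x))"
  have Pprob: "prob_space P"
  proof (rule prob_spaceI)
    have "emeasure P (space P) = (\<integral>\<^sup>+x. ennreal (s x) \<partial>lborel)"
      by (simp add: P_def emeasure_density)
    also have "\<dots> = ennreal (integral\<^sup>L lborel s)"
      by (rule nn_integral_eq_integral[OF sI']) (simp add: s0)
    finally show "emeasure P (space P) = 1" using s1 by simp
  qed
  define M' where "M' = PiM {..<n} (\<lambda>_. P)"
  interpret M': prob_space M' unfolding M'_def by (intro prob_space_PiM Pprob)
  define m where "m x = (LINT y|lborel. kernel_w K w (x - y) * s y)" for x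
  define c where "c = Mx / (real n * w)"
  have c0: "c \<ge> 0" using Mx0 w by (simp add: c_def)
  have Ex: "integral\<^sup>L M' (\<lambda>X. (sqrt (kde K n w X x) - sqrt (s x))^2)
      \<le> 2 * (sqrt (m x) - sqrt (s x))^2 + (if s x = 0 then 0 else 2 * c)" for x
  proof -
    note kf = kernel_facts[OF Km K_nonneg K_int KB w, of x]
    have Zm: "(\<lambda>y. kernel_w K w (x - y)) \<in> borel_measurable P" using kf(1) by (simp add: P_def)
    note mom = iid_moments[OF Pprob Zm kf(2) kf(3) n1]
    have mP: "integral\<^sup>L P (\<lambda>y. kernel_w K w (x - y)) = m x"
      unfolding P_def m_def by (subst integral_density) (use kf(1) in \<open>auto simp: s0 mult.commute\<close>)
    have kdeY: "kde K n w X x = (1/n) * (\<Sum>i<n. kernel_w K w (x - X i))" for X by (simp add: kde_def)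
    have Ym: "(\<lambda>X. kde K n w X x) \<in> borel_measurable M'"
      unfolding kde_def kernel_w_def M'_def P_def by measurable
    have Yb: "0 \<le> kde K n w X x \<and> kde K n w X x \<le> Mx / w" for X
    proof
      show "0 \<le> kde K n w X x" unfolding kdeY using kf(2) by (simp add: sum_nonneg)
      have "(\<Sum>i<n. kernel_w K w (x - X i)) \<le> (\<Sum>i<n. Mx / w)" by (rule sum_mono) (rule kf(3))
      then have "(1/n) * (\<Sum>i<n. kernel_w K w (x - X i)) \<le> (1/n) * (n * (Mx / w))"
        by (intro mult_left_mono) auto
      then show "kde K n w X x \<le> Mx / w" unfolding kdeY using n1 by simp
    qed
    have EY: "M'.expectation (\<lambda>X. kde K n w X x) = m x"
      using mom(1) mP unfolding kdeY M'_def by simp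
    have Var: "M'.expectation (\<lambda>X. (kde K n w X x - m x)^2) \<le> c * m x"
      using mom(2) mP unfolding kdeY M'_def c_def by (simp add: field_simps)
    show ?thesis by (rule M'.lemmaA[OF Ym Yb EY Var c0 s0])
  qed
  define F where "F x X = ennreal ((1/2) * (sqrt (kde K n w X x) - sqrt (s x))^2)" for x X
  have stepA: "(\<integral>\<^sup>+X. ennreal (hellinger2 (kde K n w X) s) \<partial>M') \<le> (\<integral>\<^sup>+X. (\<integral>\<^sup>+x. F x X \<partial>lborel) \<partial>M')"
  proof (rule nn_integral_mono)
    fix X
    have "hellinger2 (kde K n w X) s = (LINT x|lborel. (1/2) * (sqrt (kde K n w X x) - sqrt (s x))^2)"
      unfolding hellinger2_def by simp
    also have "ennreal \<dots> \<le> (\<integral>\<^sup>+x. F x X \<partial>lborel)"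
      unfolding F_def
    proof (rule ennreal_integral_le_nn)
      show "(\<lambda>x. (1/2) * (sqrt (kde K n w X x) - sqrt (s x))^2) \<in> borel_measurable lborel"
        unfolding kde_def kernel_w_def by measurable
    qed simp
    finally show "ennreal (hellinger2 (kde K n w X) s) \<le> (\<integral>\<^sup>+x. F x X \<partial>lborel)" .
  qed
  interpret LM: pair_sigma_finite lborel M' by unfold_locales
  have Fm: "(\<lambda>(x, X). F x X) \<in> borel_measurable (lborel \<Otimes>\<^sub>M M')"
    unfolding F_def kde_def kernel_w_def M'_def P_def by measurable
  have stepB: "(\<integral>\<^sup>+X. (\<integral>\<^sup>+x. F x X \<partial>lborel) \<partial>M') = (\<integral>\<^sup>+x. (\<integral>\<^sup>+X. F x X \<partial>M') \<partial>lborel)"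
    by (rule LM.Fubini'[OF Fm])
  define A where "A = {a..a + 2 * L}"
  have stepC: "(\<integral>\<^sup>+X. F x X \<partial>M') \<le> ennreal ((sqrt (m x) - sqrt (s x))^2) + ennreal c * indicator A x" for x
  proof -
    note kf = kernel_facts[OF Km K_nonneg K_int KB w, of x]
    have kdeY: "kde K n w X x = (1/n) * (\<Sum>i<n. kernel_w K w (x - X i))" for X by (simp add: kde_def)
    have Yb: "0 \<le> kde K n w X x \<and> kde K n w X x \<le> Mx / w" for X
    proof
      show "0 \<le> kde K n w X x" unfolding kdeY using kf(2) by (simp add: sum_nonneg)
      have "(\<Sum>i<n. kernel_w K w (x - X i)) \<le> (\<Sum>i<n. Mx / w)" by (rule sum_mono) (rule kf(3))
      then have "(1/n) * (\<Sum>i<n. kernel_w K w (x - X i)) \<le> (1/n) * (n * (Mx / w))"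
        by (intro mult_left_mono) auto
      then show "kde K n w X x \<le> Mx / w" unfolding kdeY using n1 by simp
    qed
    have gm: "(\<lambda>X. (1/2) * (sqrt (kde K n w X x) - sqrt (s x))^2) \<in> borel_measurable M'"
      unfolding kde_def kernel_w_def M'_def P_def by measurable
    have gb: "\<bar>(1/2) * (sqrt (kde K n w X x) - sqrt (s x))^2\<bar> \<le> Mx / w + s x" for X
    proof -
      define y where "y = kde K n w X x"
      have y0: "0 \<le> y" "y \<le> Mx / w" using Yb[of X] by (auto simp: y_def)
      have "0 \<le> (sqrt y + sqrt (s x))^2" by simp
      moreover have "(sqrt y - sqrt (s x))^2 + (sqrt y + sqrt (s x))^2 = 2 * (sqrt y)^2 + 2 * (sqrt (s x))^2"
        by (simp add: power2_diff power2_sum)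
      ultimately have "(sqrt y - sqrt (s x))^2 \<le> 2 * (sqrt y)^2 + 2 * (sqrt (s x))^2" by linarith
      then have "(sqrt y - sqrt (s x))^2 \<le> 2 * y + 2 * s x" using y0 s0[of x] by simp
      then have "(1/2) * (sqrt y - sqrt (s x))^2 \<le> Mx / w + s x" using y0 by linarith
      then show ?thesis unfolding y_def[symmetric] by simp
    qed
    have gI: "integrable M' (\<lambda>X. (1/2) * (sqrt (kde K n w X x) - sqrt (s x))^2)"
      by (rule M'.integrable_const_bound[where B="Mx / w + s x"]) (use gm gb in auto)
    have "(\<integral>\<^sup>+X. F x X \<partial>M') = ennreal (M'.expectation (\<lambda>X. (1/2) * (sqrt (kde K n w X x) - sqrt (s x))^2))"
      unfolding F_def by (rule nn_integral_eq_integral[OF gI]) simp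
    also have "M'.expectation (\<lambda>X. (1/2) * (sqrt (kde K n w X x) - sqrt (s x))^2)
        = (1/2) * M'.expectation (\<lambda>X. (sqrt (kde K n w X x) - sqrt (s x))^2)" by simp
    also have "\<dots> \<le> (sqrt (m x) - sqrt (s x))^2 + (if s x = 0 then 0 else c)"
    proof -
      have "(if s x = 0 then 0 else 2 * c) = 2 * (if s x = 0 then 0 else c)" by simp
      then show ?thesis using Ex[of x] by linarith
    qed
    also have "\<dots> \<le> (sqrt (m x) - sqrt (s x))^2 + c * indicator A x"
      using a[of x] c0 by (auto simp: A_def indicator_def)
    finally have "(\<integral>\<^sup>+X. F x X \<partial>M') \<le> ennreal ((sqrt (m x) - sqrt (s x))^2 + c * indicator A x)"
      by (simp add: ennreal_leI)
    also have "\<dots> = ennreal ((sqrt (m x) - sqrt (s x))^2) + ennreal c * indicator A x"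
      using c0 by (simp add: ennreal_plus ennreal_mult indicator_def)
    finally show ?thesis .
  qed
  have mm: "(\<lambda>x. ennreal ((sqrt (m x) - sqrt (s x))^2)) \<in> borel_measurable lborel"
    unfolding m_def kernel_w_def by measurable
  have stepD: "(\<integral>\<^sup>+x. (\<integral>\<^sup>+X. F x X \<partial>M') \<partial>lborel)
      \<le> (\<integral>\<^sup>+x. ennreal ((sqrt (m x) - sqrt (s x))^2) \<partial>lborel) + ennreal c * emeasure lborel A"
  proof -
    have "(\<integral>\<^sup>+x. (\<integral>\<^sup>+X. F x X \<partial>M') \<partial>lborel)
        \<le> (\<integral>\<^sup>+x. ennreal ((sqrt (m x) - sqrt (s x))^2) + ennreal c * indicator A x \<partial>lborel)"
      by (rule nn_integral_mono) (rule stepC)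
    also have "\<dots> = (\<integral>\<^sup>+x. ennreal ((sqrt (m x) - sqrt (s x))^2) \<partial>lborel) + (\<integral>\<^sup>+x. ennreal c * indicator A x \<partial>lborel)"
      by (rule nn_integral_add) (use mm in \<open>auto simp: A_def\<close>)
    also have "(\<integral>\<^sup>+x. ennreal c * indicator A x \<partial>lborel) = ennreal c * emeasure lborel A"
      by (rule nn_integral_cmult_indicator) (simp add: A_def)
    finally show ?thesis .
  qed
  have bias': "(\<integral>\<^sup>+x. ennreal ((sqrt (m x) - sqrt (s x))^2) \<partial>lborel) \<le> ennreal ((LINT x|lborel. max 1 (x\<^sup>2) * K x) * (\<phi> w)^2)"
    unfolding m_def by (rule bias[OF Km K_nonneg K_int KB K_mom2 sm s0 sI mono conc p0 om w])
  have EA: "emeasure lborel A = ennreal (2 * L)" using L0 by (simp add: A_def)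
  define B where "B = (LINT x|lborel. max 1 (x\<^sup>2) * K x)"
  have B0: "B \<ge> 0" unfolding B_def by (rule Bochner_Integration.integral_nonneg) (simp add: K_nonneg)
  have "(\<integral>\<^sup>+X. ennreal (hellinger2 (kde K n w X) s) \<partial>M') \<le> ennreal (B * (\<phi> w)^2) + ennreal c * ennreal (2 * L)"
    using stepA stepB stepD bias' EA unfolding B_def
    by (smt (verit) add_right_mono order_trans)
  also have "\<dots> = ennreal (B * (\<phi> w)^2 + c * (2 * L))"
    using B0 c0 L0 by (simp add: ennreal_plus ennreal_mult)
  also have "\<dots> \<le> ennreal (2 * B * (\<phi> w)\<^sup>2 + 2 * L * Mx / (real n * w) + 1 / real n)"
  proof (rule ennreal_leI)
    have "B * (\<phi> w)^2 \<le> 2 * B * (\<phi> w)^2" using B0 by simp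
    moreover have "c * (2 * L) = 2 * L * Mx / (real n * w)" by (simp add: c_def)
    moreover have "0 \<le> 1 / real n" by simp
    ultimately show "B * (\<phi> w)^2 + c * (2 * L) \<le> 2 * B * (\<phi> w)\<^sup>2 + 2 * L * Mx / (real n * w) + 1 / real n"
      by linarith
  qed
  finally show "(\<integral>\<^sup>+ X. ennreal (hellinger2 (kde K n w X) s)
          \<partial>(PiM {..<n} (\<lambda>_. density lborel (\<lambda>x. ennreal (s x)))))
        \<le> ennreal (2 * (LINT x|lborel. max 1 (x\<^sup>2) * K x) * (\<phi> w)\<^sup>2
                   + 2 * L * (SUP x. K x) / (real n * w) + 1 / real n)"
    unfolding M'_def P_def B_def Mx_def .
qed simp

end
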